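(* Let $A\in\mathrm{Mat}(2,\mathbb{Z})$ have finite order $k=\mathrm{ord}(A)$. Then $k\in\mathrm{Per}(f_A)$. Consequently, if the eigenvalues of $A$ are non-real complex roots of unity, then $\mathrm{Per}(f_A)=\mathrm{MPer}(f_A)\cup\{\mathrm{ord}(A)\}$.
   Context: $\mathbb{T}^2=\mathbb{R}^2/\mathbb{Z}^2$. For $A\in\mathrm{Mat}(2,\mathbb{Z})$ (the $2\times 2$ integer matrices), $f_A:\mathbb{T}^2\to\mathbb{T}^2$ is the toral endomorphism $x+\mathbb{Z}^2\mapsto Ax+\mathbb{Z}^2$. $A$ has finite order $k=\mathrm{ord}(A)$ if $k$ is the least positive integer with $A^k=\mathrm{id}$. For a map $f:\mathbb{T}^2\to\mathbb{T}^2$, $\mathrm{Per}(f)$ is the set of $n\in\mathbb{N}=\{1,2,\dots\}$ such that $f$ has a periodic orbit of length (least period) exactly $n$. The minimal period set is $\mathrm{MPer}(f_A)=\bigcap_{g\simeq f_A}\mathrm{Per}(g)$, the intersection over all continuous maps $g:\mathbb{T}^2\to\mathbb{T}^2$ homotopic to $f_A$. *)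

theory Defs
  imports "HOL-Analysis.Analysis"
begin

text \<open>Integer 2x2 matrices are modelled as int^2^2; the torus R^2/Z^2 is modelled
 (via the standard homeomorphism (x,y) + Z^2 \<mapsto> (e^(2 pi i x), e^(2 pi i y)))
 as the product of two unit circles in C x C.\<close>

definition torus :: "(complex \<times> complex) set" where
  "torus = {(z, w). norm z = 1 \<and> norm w = 1}"

definition mat_pow :: "int^2^2 \<Rightarrow> nat \<Rightarrow> int^2^2" where
  "mat_pow A k = (((**) A) ^^ k) (mat 1)"

definition has_finite_order :: "int^2^2 \<Rightarrow> bool" where
  "has_finite_order A \<longleftrightarrow> (\<exists>k>0. mat_pow A k = mat 1)"

definition mat_ord :: "int^2^2 \<Rightarrow> nat" where
  "mat_ord A = (LEAST k. k > 0 \<and> mat_pow A k = mat 1)"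

text \<open>The toral endomorphism f_A: x + Z^2 \<mapsto> A x + Z^2, in circle coordinates
 (z,w) = (e^(2 pi i x1), e^(2 pi i x2)).\<close>
definition toral_map :: "int^2^2 \<Rightarrow> complex \<times> complex \<Rightarrow> complex \<times> complex" where
  "toral_map A = (\<lambda>(z, w). (z powi (A$1$1) * w powi (A$1$2),
                             z powi (A$2$1) * w powi (A$2$2)))"

definition Per :: "'a set \<Rightarrow> ('a \<Rightarrow> 'a) \<Rightarrow> nat set" where
  "Per S g = {n. n \<ge> 1 \<and> (\<exists>x\<in>S. (g ^^ n) x = x \<and> (\<forall>m. 0 < m \<and> m < n \<longrightarrow> (g ^^ m) x \<noteq> x))}"

definition MPer :: "int^2^2 \<Rightarrow> nat set" where
  "MPer A = (\<Inter>{Per torus g | g. homotopic_with_canon (\<lambda>_. True) torus torus (toral_map A) g})"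

definition is_complex_eigenvalue :: "int^2^2 \<Rightarrow> complex \<Rightarrow> bool" where
  "is_complex_eigenvalue A \<mu> \<longleftrightarrow>
     (\<exists>v::complex^2. v \<noteq> 0 \<and> (map_matrix of_int A) *v v = \<mu> *s v)"

end

theory Submission
  imports Defs
begin

definition pp :: "real \<times> real \<Rightarrow> complex \<times> complex" where
  "pp x = (cis (2*pi * fst x), cis (2*pi * snd x))"

definition LA :: "int^2^2 \<Rightarrow> real \<times> real \<Rightarrow> real \<times> real" where
  "LA A x = (of_int (A$1$1) * fst x + of_int (A$1$2) * snd x,
             of_int (A$2$1) * fst x + of_int (A$2$2) * snd x)"

definition LAi :: "int^2^2 \<Rightarrow> int \<times> int \<Rightarrow> int \<times> int" where
  "LAi A x = ((A$1$1) * fst x + (A$1$2) * snd x, (A$2$1) * fst x + (A$2$2) * snd x)"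

definition ri :: "int \<times> int \<Rightarrow> real \<times> real" where
  "ri m = (of_int (fst m), of_int (snd m))"

lemma pp_torus: "pp x \<in> torus"
  by (simp add: pp_def torus_def)

lemma cis_norm1: "norm z = 1 \<Longrightarrow> z = cis (2*pi*(Arg z / (2*pi)))"
proof -
  assume "norm z = 1"
  then have "z \<noteq> 0" "sgn z = z" by (auto simp: sgn_div_norm)
  then show ?thesis using cis_Arg[of z] by simp
qed

lemma torus_pp: "y \<in> torus \<Longrightarrow> \<exists>x. y = pp x"
proof -
  assume y: "y \<in> torus"
  obtain a b where ab: "y = (a, b)" by (cases y)
  have "cis (2*pi*(Arg a / (2*pi))) = a" "cis (2*pi*(Arg b / (2*pi))) = b"
    using cis_norm1[of a] cis_norm1[of b] y ab by (auto simp: torus_def)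
  then have "pp (Arg a / (2*pi), Arg b / (2*pi)) = y"
    unfolding pp_def ab fst_conv snd_conv by simp
  then show ?thesis by metis
qed

lemma cis_2pi_eq: "cis (2*pi*a) = cis (2*pi*b) \<longleftrightarrow> a - b \<in> \<int>"
proof -
  have "cis (2*pi*a) = cis (2*pi*b) \<longleftrightarrow> cis (2*pi*(a-b)) = 1"
  proof -
    have e: "cis (2*pi*(a-b)) = cis (2*pi*a) / cis (2*pi*b)" by (simp add: cis_divide right_diff_distrib)
    show ?thesis unfolding e by (simp add: divide_eq_1_iff)
  qed
  also have "\<dots> \<longleftrightarrow> (\<exists>n::int. 2*pi*(a-b) = of_int n * (2*pi))"
    unfolding cis_conv_exp exp_eq_1 by (auto simp: algebra_simps)
  also have "\<dots> \<longleftrightarrow> a - b \<in> \<int>"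
    by (auto simp: Ints_def)
  finally show ?thesis .
qed

lemma pp_eq: "pp x = pp y \<longleftrightarrow> (\<exists>m. x = y + ri m)"
proof
  assume "pp x = pp y"
  then have "fst x - fst y \<in> \<int>" "snd x - snd y \<in> \<int>"
    by (auto simp: pp_def cis_2pi_eq)
  then obtain a b where "fst x - fst y = of_int a" "snd x - snd y = of_int b"
    by (metis Ints_cases)
  then have "x = y + ri (a,b)" by (auto simp: ri_def prod_eq_iff)
  then show "\<exists>m. x = y + ri m" ..
next
  assume "\<exists>m. x = y + ri m"
  then obtain m where "x = y + ri m" by blast
  then show "pp x = pp y"
    by (auto simp: pp_def ri_def cis_2pi_eq)
qed

lemma pp_add_ri [simp]: "pp (x + ri m) = pp x"
  using pp_eq by blast

lemma toral_pp: "toral_map A (pp x) = pp (LA A x)"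
  by (simp add: toral_map_def pp_def LA_def cis_power_int cis_mult algebra_simps)

lemma LA_mult: "LA (A ** B) x = LA A (LA B x)"
  by (simp add: LA_def matrix_matrix_mult_def sum_2 algebra_simps)

lemma LAi_mult: "LAi (A ** B) x = LAi A (LAi B x)"
  by (simp add: LAi_def matrix_matrix_mult_def sum_2 algebra_simps)

lemma LA_ri: "LA A (ri m) = ri (LAi A m)"
  by (simp add: LA_def LAi_def ri_def)

lemma ri_add: "ri (m + n) = ri m + ri n"
  by (simp add: ri_def)

lemma LA_add: "LA A (x + y) = LA A x + LA A y"
  by (simp add: LA_def algebra_simps)

lemma LAi_add: "LAi A (x + y) = LAi A x + LAi A y"
  by (simp add: LAi_def algebra_simps)

lemma LA_one [simp]: "LA (mat 1) x = x"
  by (simp add: LA_def mat_def)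

lemma LAi_one [simp]: "LAi (mat 1) x = x"
  by (simp add: LAi_def mat_def)

lemma mat_pow_Suc: "mat_pow A (Suc n) = A ** mat_pow A n"
  by (simp add: mat_pow_def)

lemma mat_pow_0 [simp]: "mat_pow A 0 = mat 1"
  by (simp add: mat_pow_def)

lemma toral_iter_pp: "(toral_map A ^^ n) (pp x) = pp (LA (mat_pow A n) x)"
  by (induction n) (simp_all add: mat_pow_Suc LA_mult toral_pp)

lemma toral_iter: "y \<in> torus \<Longrightarrow> (toral_map A ^^ n) y = toral_map (mat_pow A n) y"
proof -
  assume "y \<in> torus"
  then obtain x where "y = pp x" using torus_pp by blast
  then show ?thesis by (simp add: toral_iter_pp toral_pp)
qed

lemma int_arith_key:
  fixes r1 r2 M N n :: int
  assumes "\<bar>r1\<bar> \<le> M" "\<bar>r2\<bar> \<le> M" "N = 2*M+2" "r1 * N + r2 = n * N^2"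
  shows "r1 = 0 \<and> r2 = 0"
proof -
  have M0: "M \<ge> 0" using assms by linarith
  have "\<bar>r1 * N + r2\<bar> \<le> M*N + M"
  proof -
    have "\<bar>r1 * N\<bar> \<le> M * N" using assms M0 by (simp add: abs_mult mult_right_mono)
    then show ?thesis using assms by linarith
  qed
  also have "\<dots> < N^2"
  proof -
    have "M*M \<ge> 0" using M0 by simp
    moreover have "N^2 = 4*(M*M) + 8*M + 4" by (simp add: assms(3) power2_eq_square algebra_simps)
    moreover have "M*N = 2*(M*M) + 2*M" by (simp add: assms(3) algebra_simps)
    ultimately show ?thesis using M0 by linarith
  qed
  finally have "\<bar>n * N^2\<bar> < N^2" using assms by simp
  then have "n = 0"
  proof (rule contrapos_pp)
    assume "n \<noteq> 0"
    then have "\<bar>n\<bar> \<ge> 1" by simp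
    then have "\<bar>n\<bar> * N^2 \<ge> 1 * N^2" by (intro mult_right_mono) auto
    then show "\<not> \<bar>n * N^2\<bar> < N^2" by (simp add: abs_mult)
  qed
  then have "r2 = - r1 * N" using assms by simp
  have "r1 = 0"
  proof (rule ccontr)
    assume "r1 \<noteq> 0"
    then have "\<bar>r1\<bar> \<ge> 1" by simp
    then have "\<bar>r1\<bar> * N \<ge> 1 * N" using assms M0 by (intro mult_right_mono) auto
    then have "\<bar>r2\<bar> \<ge> N" using \<open>r2 = - r1 * N\<close> assms M0 by (simp add: abs_mult)
    then show False using assms M0 by linarith
  qed
  then show ?thesis using \<open>r2 = - r1 * N\<close> by simp
qed

lemma real_key:
  fixes r1 r2 M N :: int
  assumes "\<bar>r1\<bar> \<le> M" "\<bar>r2\<bar> \<le> M" "N = 2*M+2" "\<not> (r1 = 0 \<and> r2 = 0)"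
  shows "of_int r1 / of_int N + of_int r2 / of_int N ^ 2 \<notin> (\<int> :: real set)"
proof
  assume "of_int r1 / of_int N + of_int r2 / of_int N ^ 2 \<in> (\<int> :: real set)"
  then obtain n where n: "of_int r1 / of_int N + of_int r2 / of_int N ^ 2 = (of_int n :: real)"
    by (metis Ints_cases)
  have N0: "(of_int N :: real) \<noteq> 0" using assms by simp
  have "(of_int (r1 * N + r2) :: real) = of_int (n * N^2)"
    using n N0 by (simp add: field_simps power2_eq_square)
  then have "r1 * N + r2 = n * N^2" by (simp only: of_int_eq_iff)
  then show False using int_arith_key assms by blast
qed

lemma ord_props:
  assumes "has_finite_order A"
  shows "mat_ord A > 0" "mat_pow A (mat_ord A) = mat 1"
        "\<And>j. 0 < j \<Longrightarrow> j < mat_ord A \<Longrightarrow> mat_pow A j \<noteq> mat 1"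
proof -
  have ex: "\<exists>k. k > 0 \<and> mat_pow A k = mat 1" using assms by (auto simp: has_finite_order_def)
  show "mat_ord A > 0" "mat_pow A (mat_ord A) = mat 1"
    using LeastI_ex[OF ex] by (auto simp: mat_ord_def)
  show "\<And>j. 0 < j \<Longrightarrow> j < mat_ord A \<Longrightarrow> mat_pow A j \<noteq> mat 1"
    unfolding mat_ord_def using not_less_Least by blast
qed

lemma mat2_eqI: "(X::int^2^2)$1$1 = Y$1$1 \<Longrightarrow> X$1$2 = Y$1$2 \<Longrightarrow> X$2$1 = Y$2$1 \<Longrightarrow> X$2$2 = Y$2$2 \<Longrightarrow> X = Y"
  by (simp add: vec_eq_iff forall_2)

lemma part1:
  assumes "has_finite_order A"
  shows "mat_ord A \<in> Per torus (toral_map A)"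
proof -
  define k where "k = mat_ord A"
  note kp = ord_props[OF assms, folded k_def]
  define E where "E = (\<lambda>(d,i,j). \<bar>(mat_pow A d)$i$j - (mat 1::int^2^2)$i$j\<bar>)"
  define M where "M = Max (E ` ({..<k} \<times> UNIV \<times> UNIV))"
  have fin: "finite (E ` ({..<k} \<times> (UNIV::2 set) \<times> (UNIV::2 set)))" by simp
  have Mb: "\<bar>(mat_pow A d)$i$j - (mat 1::int^2^2)$i$j\<bar> \<le> M" if "d < k" for d i j
  proof -
    have "E (d,i,j) \<in> E ` ({..<k} \<times> UNIV \<times> UNIV)" using that by auto
    then have "E (d,i,j) \<le> M" unfolding M_def using Max_ge[OF fin] by blast
    then show ?thesis by (simp add: E_def)
  qed
  define N where "N = 2*M+2"
  define x0 where "x0 = (1 / real_of_int N, 1 / real_of_int N ^ 2)"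
  define y where "y = pp x0"
  have "y \<in> torus" by (simp add: y_def pp_torus)
  moreover have "(toral_map A ^^ k) y = y"
    by (simp add: y_def toral_iter_pp kp)
  moreover have "(toral_map A ^^ m) y \<noteq> y" if m: "0 < m" "m < k" for m
  proof
    assume "(toral_map A ^^ m) y = y"
    then obtain c where c: "LA (mat_pow A m) x0 = x0 + ri c"
      by (auto simp: y_def toral_iter_pp pp_eq)
    define B where "B = mat_pow A m"
    have b11: "\<bar>B$1$1 - 1\<bar> \<le> M" using Mb[OF m(2), of 1 1] by (simp add: B_def mat_def)
    have b12: "\<bar>B$1$2\<bar> \<le> M" using Mb[OF m(2), of 1 2] by (simp add: B_def mat_def)
    have b21: "\<bar>B$2$1\<bar> \<le> M" using Mb[OF m(2), of 2 1] by (simp add: B_def mat_def)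
    have b22: "\<bar>B$2$2 - 1\<bar> \<le> M" using Mb[OF m(2), of 2 2] by (simp add: B_def mat_def)
    have e1: "of_int (B$1$1 - 1) / of_int N + of_int (B$1$2) / of_int N ^ 2 = (of_int (fst c) :: real)"
    proof -
      have "of_int (B$1$1) / of_int N + of_int (B$1$2) / of_int N ^ 2 = (of_int (fst c) :: real) + 1 / of_int N"
        using arg_cong[OF c, of fst] by (simp add: B_def LA_def x0_def ri_def)
      then show ?thesis by (simp add: diff_divide_distrib)
    qed
    have e2: "of_int (B$2$1) / of_int N + of_int (B$2$2 - 1) / of_int N ^ 2 = (of_int (snd c) :: real)"
    proof -
      have "of_int (B$2$1) / of_int N + of_int (B$2$2) / of_int N ^ 2 = (of_int (snd c) :: real) + 1 / of_int N ^ 2"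
        using arg_cong[OF c, of snd] by (simp add: B_def LA_def x0_def ri_def)
      then show ?thesis by (simp add: diff_divide_distrib)
    qed
    have "B$1$1 - 1 = 0 \<and> B$1$2 = 0"
      using real_key[OF b11 b12 N_def] e1 by (metis Ints_of_int)
    moreover have "B$2$1 = 0 \<and> B$2$2 - 1 = 0"
      using real_key[OF b21 b22 N_def] e2 by (metis Ints_of_int)
    ultimately have "B = mat 1" by (intro mat2_eqI) (auto simp: mat_def)
    then show False using kp(3)[OF m] B_def by simp
  qed
  ultimately show ?thesis
    unfolding Per_def k_def[symmetric] using kp(1) by force
qed

lemma exp_norm1_cis: "norm (exp z) = 1 \<Longrightarrow> exp z = cis (2*pi*(Im z / (2*pi)))"
proof -
  assume "norm (exp z) = 1"
  then have "Re z = 0" by simp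
  then show ?thesis by (simp add: exp_eq_polar)
qed

lemma int_valued_const:
  fixes f :: "'a::topological_space \<Rightarrow> real"
  assumes "connected S" "continuous_on S f" "\<And>x. x \<in> S \<Longrightarrow> f x \<in> \<int>"
    "x \<in> S" "y \<in> S"
  shows "f x = f y"
proof -
  have "f constant_on S"
  proof (rule continuous_discrete_range_constant[OF assms(1,2)])
    fix x assume x: "x \<in> S"
    show "\<exists>e>0. \<forall>y. y \<in> S \<and> f y \<noteq> f x \<longrightarrow> e \<le> norm (f y - f x)"
    proof (intro exI[of _ 1] conjI allI impI)
      fix y assume "y \<in> S \<and> f y \<noteq> f x"
      then show "1 \<le> norm (f y - f x)"
        using Ints_nonzero_abs_ge1[of "f y - f x"] assms(3) x by auto
    qed simp
  qed
  then show ?thesis using assms(4,5) by (auto simp: constant_on_def)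
qed

lemma lattice_valued_const:
  fixes f :: "'a::topological_space \<Rightarrow> real \<times> real"
  assumes "connected S" "continuous_on S f" "\<And>x. x \<in> S \<Longrightarrow> \<exists>m. f x = ri m"
    "x \<in> S" "y \<in> S"
  shows "f x = f y"
proof -
  have "fst (f x) = fst (f y)"
    apply (rule int_valued_const[OF assms(1) _ _ assms(4,5), of "\<lambda>z. fst (f z)"])
     apply (intro continuous_intros assms(2))
    using assms(3) by (force simp: ri_def)
  moreover have "snd (f x) = snd (f y)"
    apply (rule int_valued_const[OF assms(1) _ _ assms(4,5), of "\<lambda>z. snd (f z)"])
     apply (intro continuous_intros assms(2))
    using assms(3) by (force simp: ri_def)
  ultimately show ?thesis by (simp add: prod_eq_iff)
qed

lemma continuous_pp: "continuous_on S pp"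
  unfolding pp_def by (intro continuous_intros)

lemma hom_unfold:
  assumes "homotopic_with_canon (\<lambda>_. True) torus torus f g"
  obtains h where "continuous_on ({0..1::real} \<times> torus) h" "h ` ({0..1::real} \<times> torus) \<subseteq> torus"
    "\<And>x. x \<in> torus \<Longrightarrow> h (0, x) = f x" "\<And>x. x \<in> torus \<Longrightarrow> h (1, x) = g x"
proof -
  obtain h where "continuous_on ({0..1::real} \<times> torus) h" "h \<in> ({0..1::real} \<times> torus) \<rightarrow> torus"
    "\<forall>x\<in>torus. h (0, x) = f x" "\<forall>x\<in>torus. h (1, x) = g x"
    using assms by (auto simp: homotopic_with)
  then show ?thesis using that by (auto simp: image_subset_iff_funcset)
qed

lemma continuous_LA: "continuous_on S (LA A)"
  unfolding LA_def by (intro continuous_intros)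

lemma LA_zero [simp]: "LA A 0 = 0"
  by (simp add: LA_def zero_prod_def)

lemma lift:
  assumes hom: "homotopic_with_canon (\<lambda>_. True) torus torus (toral_map A) g"
  obtains G where "continuous_on UNIV G" "\<And>x. g (pp x) = pp (G x)"
    "\<And>x m. G (x + ri m) = G x + ri (LAi A m)"
proof -
  obtain h where h: "continuous_on ({0..1::real} \<times> torus) h" "h ` ({0..1::real} \<times> torus) \<subseteq> torus"
    "\<And>x. x \<in> torus \<Longrightarrow> h (0, x) = toral_map A x" "\<And>x. x \<in> torus \<Longrightarrow> h (1, x) = g x"
    using hom_unfold[OF hom] by blast
  define S where "S = {0..1::real} \<times> (UNIV::(real\<times>real) set)"
  define F where "F = (\<lambda>z. h (fst z, pp (snd z)))"
  have sub: "(\<lambda>z. (fst z, pp (snd z))) ` S \<subseteq> {0..1::real} \<times> torus"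
    by (auto simp: S_def pp_torus)
  have Fc: "continuous_on S F"
    unfolding F_def
    by (rule continuous_on_compose2[OF h(1) _ sub]) (unfold pp_def, intro continuous_intros)
  have Ft: "F z \<in> torus" if "z \<in> S" for z
    using h(2) sub that unfolding F_def by blast
  have contr: "contractible S"
    by (simp add: S_def convex_imp_contractible convex_Times)
  obtain L1 where L1: "continuous_on S L1" "\<And>z. z \<in> S \<Longrightarrow> fst (F z) = exp (L1 z)"
  proof (rule continuous_logarithm_on_contractible[OF _ contr])
    show "continuous_on S (\<lambda>z. fst (F z))" by (intro continuous_intros Fc)
    show "fst (F z) \<noteq> 0" if "z \<in> S" for z using Ft[OF that] by (auto simp: torus_def)
  qed blast
  obtain L2 where L2: "continuous_on S L2" "\<And>z. z \<in> S \<Longrightarrow> snd (F z) = exp (L2 z)"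
  proof (rule continuous_logarithm_on_contractible[OF _ contr])
    show "continuous_on S (\<lambda>z. snd (F z))" by (intro continuous_intros Fc)
    show "snd (F z) \<noteq> 0" if "z \<in> S" for z using Ft[OF that] by (auto simp: torus_def)
  qed blast
  define K where "K = (\<lambda>z. (Im (L1 z) / (2*pi), Im (L2 z) / (2*pi)))"
  have Kc: "continuous_on S K"
    unfolding K_def by (intro continuous_intros L1(1) L2(1)) auto
  have FK: "F z = pp (K z)" if "z \<in> S" for z
  proof -
    have "norm (exp (L1 z)) = 1" "norm (exp (L2 z)) = 1"
      using Ft[OF that] L1(2)[OF that] L2(2)[OF that] by (auto simp: torus_def)
    then show ?thesis
      using L1(2)[OF that] L2(2)[OF that] exp_norm1_cis
      by (simp add: pp_def K_def prod_eq_iff)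
  qed
  have S0: "(0, x) \<in> S" "(1, x) \<in> S" for x by (auto simp: S_def)
  have K01: "continuous_on UNIV (\<lambda>x. K (t, x))" if "t \<in> {0..1}" for t
  proof (rule continuous_on_compose2[OF Kc])
    show "continuous_on UNIV (\<lambda>x. (t, x))" by (intro continuous_intros)
    show "(\<lambda>x. (t, x)) ` UNIV \<subseteq> S" using that by (auto simp: S_def)
  qed
  have Kpp: "h (t, pp x) = pp (K (t, x))" if "t \<in> {0..1}" for t x
    using FK[of "(t,x)"] that by (simp add: F_def S_def)
  have K0: "K (0, x) - LA A x = K (0, 0)" for x
  proof -
    have "K (0, x) - LA A x = K (0, 0) - LA A 0"
    proof (rule lattice_valued_const[of UNIV "\<lambda>x. K (0, x) - LA A x" x 0])
      show "continuous_on UNIV (\<lambda>x. K (0, x) - LA A x)"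
        by (intro continuous_intros K01 continuous_LA) simp
      fix y
      have "pp (K (0, y)) = pp (LA A y)"
        using Kpp[of 0 y] h(3)[OF pp_torus] toral_pp by simp
      then obtain m where "K (0, y) = LA A y + ri m" using pp_eq by blast
      then have "K (0, y) - LA A y = ri m" by simp
      then show "\<exists>m. K (0, y) - LA A y = ri m" by blast
    qed auto
    then show ?thesis by simp
  qed
  have KD: "K (1, x + ri m) - K (1, x) = ri (LAi A m)" for x m
  proof -
    define D where "D = (\<lambda>z. K (fst z, snd z + ri m) - K z)"
    have "D (1, x) = D (0, x)"
    proof (rule lattice_valued_const[of S D "(1,x)" "(0,x)"])
      show "connected S" using contr contractible_imp_connected by blast
      have "continuous_on S (\<lambda>z. K (fst z, snd z + ri m))"
      proof (rule continuous_on_compose2[OF Kc])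
        show "continuous_on S (\<lambda>z. (fst z, snd z + ri m))" by (intro continuous_intros)
        show "(\<lambda>z. (fst z, snd z + ri m)) ` S \<subseteq> S" by (auto simp: S_def)
      qed
      then show "continuous_on S D" unfolding D_def by (intro continuous_intros Kc)
      fix z assume z: "z \<in> S"
      have "pp (K (fst z, snd z + ri m)) = pp (K z)"
        using Kpp[of "fst z" "snd z + ri m"] Kpp[of "fst z" "snd z"] z by (auto simp: S_def)
      then obtain c where "K (fst z, snd z + ri m) = K z + ri c" using pp_eq by blast
      then have "D z = ri c" by (simp add: D_def)
      then show "\<exists>c. D z = ri c" by blast
    qed (auto simp: S_def)
    also have "D (0, x) = LA A (x + ri m) - LA A x"
    proof -
      have a: "K (0, x + ri m) = K (0, 0) + LA A (x + ri m)" using K0[of "x + ri m"] unfolding diff_eq_eq .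
      have b: "K (0, x) = K (0, 0) + LA A x" using K0[of x] unfolding diff_eq_eq .
      show ?thesis unfolding D_def fst_conv snd_conv a b by simp
    qed
    also have "\<dots> = ri (LAi A m)" by (simp add: LA_add LA_ri)
    finally show ?thesis by (simp add: D_def)
  qed
  show ?thesis
  proof (rule that[of "\<lambda>x. K (1, x)"])
    show "continuous_on UNIV (\<lambda>x. K (1, x))" by (rule K01) simp
    show "g (pp x) = pp (K (1, x))" for x using Kpp[of 1 x] h(4)[OF pp_torus] by simp
    show "K (1, x + ri m) = K (1, x) + ri (LAi A m)" for x m using KD[of x m] by (simp add: algebra_simps)
  qed
qed

lemma iter_G:
  assumes G: "\<And>x m. G (x + ri m) = G x + ri (LAi A m)"
  shows "(G ^^ n) (x + ri m) = (G ^^ n) x + ri (LAi (mat_pow A n) m)"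
proof (induction n)
  case 0 then show ?case by simp
next
  case (Suc n)
  then show ?case by (simp add: G mat_pow_Suc LAi_mult)
qed

lemma iter_pp:
  assumes "\<And>x. g (pp x) = pp (G x)"
  shows "(g ^^ n) (pp x) = pp ((G ^^ n) x)"
  by (induction n) (simp_all add: assms)

lemma iter_cont:
  fixes G :: "'a::topological_space \<Rightarrow> 'a"
  assumes "continuous_on UNIV G"
  shows "continuous_on UNIV (G ^^ n)"
proof (induction n)
  case 0
  have "G ^^ 0 = id" by (rule ext) simp
  then show ?case by (simp add: continuous_on_id)
next
  case (Suc n)
  then show ?case
    using continuous_on_compose[of UNIV "G ^^ n" G] assms
    by (simp add: comp_def continuous_on_subset)
qed

lemma floor_decomp: "\<exists>m y. x = y + ri m \<and> y \<in> {0..1} \<times> {0..1::real}"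
proof -
  let ?m = "(\<lfloor>fst x\<rfloor>, \<lfloor>snd x\<rfloor>)"
  have "x = (x - ri ?m) + ri ?m" by simp
  moreover have "x - ri ?m = (frac (fst x), frac (snd x))"
    by (simp add: ri_def frac_def prod_eq_iff)
  moreover have "(frac (fst x), frac (snd x)) \<in> {0..1} \<times> {0..1::real}"
  proof -
    have "frac (fst x) < 1" "frac (snd x) < 1" "0 \<le> frac (fst x)" "0 \<le> frac (snd x)"
      by (simp_all add: frac_lt_1 frac_ge_0)
    then show ?thesis by simp
  qed
  ultimately have "x = (x - ri ?m) + ri ?m \<and> x - ri ?m \<in> {0..1} \<times> {0..1::real}" by simp
  then show ?thesis by (intro exI[of _ ?m] exI[of _ "x - ri ?m"])
qed

lemma bounded_dev:
  assumes c: "continuous_on UNIV F" and F: "\<And>x m. F (x + ri m) = F x + ri (LAi B m)"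
  obtains C where "\<And>x. norm (F x - LA B x) \<le> C"
proof -
  define \<phi> where "\<phi> = (\<lambda>x. F x - LA B x)"
  have per: "\<phi> (x + ri m) = \<phi> x" for x m
    by (simp add: \<phi>_def F LA_add LA_ri)
  have "continuous_on UNIV \<phi>" unfolding \<phi>_def by (intro continuous_intros c continuous_LA)
  then have "compact (\<phi> ` ({0..1} \<times> {0..1}))"
    by (intro compact_continuous_image compact_Times) (auto intro: continuous_on_subset)
  then obtain C where C: "\<And>y. y \<in> \<phi> ` ({0..1} \<times> {0..1}) \<Longrightarrow> norm y \<le> C"
    using compact_imp_bounded bounded_iff by metis
  show ?thesis
  proof (rule that)
    fix x
    obtain m y where "x = y + ri m" "y \<in> {0..1} \<times> {0..1::real}" using floor_decomp by blast
    then have "F x - LA B x = \<phi> y" using per by (simp add: \<phi>_def)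
    then show "norm (F x - LA B x) \<le> C" using C \<open>y \<in> _\<close> by simp
  qed
qed

definition detm1 :: "int^2^2 \<Rightarrow> int" where
  "detm1 B = (B$1$1 - 1) * (B$2$2 - 1) - B$1$2 * B$2$1"

lemma solve_shift:
  assumes c: "continuous_on UNIV F" and bd: "\<And>x. norm (F x - LA B x) \<le> C"
    and det: "detm1 B \<noteq> 0"
  shows "\<exists>x. F x = x + v"
proof -
  define d11 where "d11 = real_of_int (B$1$1) - 1"
  define d12 where "d12 = real_of_int (B$1$2)"
  define d21 where "d21 = real_of_int (B$2$1)"
  define d22 where "d22 = real_of_int (B$2$2) - 1"
  define \<delta> where "\<delta> = d11 * d22 - d12 * d21"
  have \<delta>: "\<delta> \<noteq> 0"
  proof
    assume "\<delta> = 0"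
    then have "real_of_int (detm1 B) = 0" by (simp add: \<delta>_def detm1_def d11_def d12_def d21_def d22_def)
    then show False using det by simp
  qed
  define T where "T = (\<lambda>y::real\<times>real. ((d22 * fst y - d12 * snd y) / \<delta>, (d11 * snd y - d21 * fst y) / \<delta>))"
  define K where "K = (\<bar>d11\<bar> + \<bar>d12\<bar> + \<bar>d21\<bar> + \<bar>d22\<bar>) / \<bar>\<delta>\<bar>"
  have Tn: "norm (T y) \<le> K * norm y" for y
  proof -
    have f: "\<bar>fst y\<bar> \<le> norm y" "\<bar>snd y\<bar> \<le> norm y"
      using norm_fst_le[of "fst y" "snd y"] norm_snd_le[of "snd y" "fst y"] by auto
    have "norm (T y) \<le> norm (fst (T y)) + norm (snd (T y))"
      using norm_Pair_le[of "fst (T y)" "snd (T y)"] by simp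
    also have "\<dots> = (\<bar>d22 * fst y - d12 * snd y\<bar> + \<bar>d11 * snd y - d21 * fst y\<bar>) / \<bar>\<delta>\<bar>"
      by (simp add: T_def add_divide_distrib)
    also have "\<dots> \<le> ((\<bar>d22\<bar> + \<bar>d12\<bar> + \<bar>d11\<bar> + \<bar>d21\<bar>) * norm y) / \<bar>\<delta>\<bar>"
    proof (rule divide_right_mono)
      have "\<bar>d22 * fst y\<bar> \<le> \<bar>d22\<bar> * norm y" "\<bar>d12 * snd y\<bar> \<le> \<bar>d12\<bar> * norm y"
           "\<bar>d11 * snd y\<bar> \<le> \<bar>d11\<bar> * norm y" "\<bar>d21 * fst y\<bar> \<le> \<bar>d21\<bar> * norm y"
        using f by (simp_all add: abs_mult mult_left_mono)
      then show "\<bar>d22 * fst y - d12 * snd y\<bar> + \<bar>d11 * snd y - d21 * fst y\<bar> \<le> (\<bar>d22\<bar> + \<bar>d12\<bar> + \<bar>d11\<bar> + \<bar>d21\<bar>) * norm y"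
        by (simp add: algebra_simps) linarith
    qed simp
    also have "\<dots> = K * norm y" by (simp add: K_def algebra_simps)
    finally show ?thesis .
  qed
  have K0: "K \<ge> 0" by (simp add: K_def)
  define \<psi> where "\<psi> = (\<lambda>x. F x - LA B x)"
  define \<Phi> where "\<Phi> = (\<lambda>x. T (v - \<psi> x))"
  define R where "R = K * (norm v + C) + 1"
  have C0: "C \<ge> 0" using bd[of 0] norm_ge_zero order_trans by blast
  have R0: "R > 0" using K0 C0 by (simp add: R_def add_nonneg_pos)
  have contT: "continuous_on S T" for S unfolding T_def by (intro continuous_intros) (auto simp: \<delta>)
  have contP: "continuous_on (cball 0 R) \<Phi>"
    unfolding \<Phi>_def \<psi>_def
    by (rule continuous_on_compose2[OF contT]) (auto intro!: continuous_intros continuous_LA intro: continuous_on_subset[OF c])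
  have "\<Phi> x \<in> cball 0 R" for x
  proof -
    have "norm (v - \<psi> x) \<le> norm v + C" using bd[of x] norm_triangle_ineq4[of v "\<psi> x"] by (simp add: \<psi>_def)
    then have "norm (\<Phi> x) \<le> K * (norm v + C)" using Tn[of "v - \<psi> x"] K0 mult_left_mono order_trans
      unfolding \<Phi>_def by blast
    then show ?thesis by (simp add: R_def)
  qed
  then obtain x where x: "\<Phi> x = x"
    using brouwer_ball[OF R0 contP] by blast
  have LAm: "LA B z - z = (d11 * fst z + d12 * snd z, d21 * fst z + d22 * snd z)" for z
    by (simp add: LA_def d11_def d12_def d21_def d22_def prod_eq_iff algebra_simps)
  have inv: "LA B (T y) - T y = y" for y
  proof -
    have "d11 * fst (T y) + d12 * snd (T y) = fst y"
      using \<delta> unfolding T_def fst_conv snd_conv by (simp add: field_simps) (simp add: \<delta>_def algebra_simps)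
    moreover have "d21 * fst (T y) + d22 * snd (T y) = snd y"
      using \<delta> unfolding T_def fst_conv snd_conv by (simp add: field_simps) (simp add: \<delta>_def algebra_simps)
    ultimately show ?thesis unfolding LAm by (simp add: prod_eq_iff)
  qed
  have "F x = LA B x + \<psi> x" by (simp add: \<psi>_def)
  also have "LA B x = x + (v - \<psi> x)" using inv[of "v - \<psi> x"] x unfolding \<Phi>_def by (metis diff_add_cancel add.commute)
  finally have "F x = x + v" by simp
  then show ?thesis by blast
qed

lemma ri_inj: "ri a = ri b \<longleftrightarrow> a = b"
  by (auto simp: ri_def prod_eq_iff)

lemma mat_pow_1: "mat_pow A 1 = A"
  by (simp add: mat_pow_def)

lemma lift_solve:
  assumes hom: "homotopic_with_canon (\<lambda>_. True) torus torus (toral_map A) g"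
  obtains G where "\<And>x. g (pp x) = pp (G x)" "\<And>x m. G (x + ri m) = G x + ri (LAi A m)"
    "\<And>n v. detm1 (mat_pow A n) \<noteq> 0 \<Longrightarrow> \<exists>x. (G ^^ n) x = x + ri v"
proof -
  obtain G where G: "continuous_on UNIV G" "\<And>x. g (pp x) = pp (G x)"
    "\<And>x m. G (x + ri m) = G x + ri (LAi A m)"
    using lift[OF hom] by blast
  have "\<exists>x. (G ^^ n) x = x + ri v" if d: "detm1 (mat_pow A n) \<noteq> 0" for n v
  proof -
    have c: "continuous_on UNIV (G ^^ n)" by (rule iter_cont[OF G(1)])
    obtain C where "\<And>x. norm ((G ^^ n) x - LA (mat_pow A n) x) \<le> C"
      using bounded_dev[OF c iter_G[OF G(3)]] by blast
    then show ?thesis using solve_shift[OF c _ d] by blast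
  qed
  then show ?thesis using that G by blast
qed

lemma MPer_intro:
  assumes "\<And>g. homotopic_with_canon (\<lambda>_. True) torus torus (toral_map A) g \<Longrightarrow> n \<in> Per torus g"
  shows "n \<in> MPer A"
  using assms unfolding MPer_def by blast

lemma MPer1:
  assumes "detm1 A \<noteq> 0"
  shows "1 \<in> MPer A"
proof (rule MPer_intro)
  fix g assume hom: "homotopic_with_canon (\<lambda>_. True) torus torus (toral_map A) g"
  obtain G where G: "\<And>x. g (pp x) = pp (G x)" "\<And>x m. G (x + ri m) = G x + ri (LAi A m)"
    "\<And>n v. detm1 (mat_pow A n) \<noteq> 0 \<Longrightarrow> \<exists>x. (G ^^ n) x = x + ri v"
    using lift_solve[OF hom] by blast
  have "detm1 (mat_pow A 1) \<noteq> 0" using assms by (simp add: mat_pow_def)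
  then obtain x where "(G ^^ 1) x = x + ri 0" using G(3) by blast
  then have "G x = x + ri 0" by simp
  then have "g (pp x) = pp x" using G(1) pp_add_ri by metis
  then show "1 \<in> Per torus g" unfolding Per_def
    by (intro CollectI conjI bexI[of _ "pp x"]) (auto simp: pp_torus)
qed

lemma MPer2:
  assumes "detm1 (mat_pow A 2) \<noteq> 0" "\<And>u. v \<noteq> u + LAi A u"
  shows "2 \<in> MPer A"
proof (rule MPer_intro)
  fix g assume hom: "homotopic_with_canon (\<lambda>_. True) torus torus (toral_map A) g"
  obtain G where G: "\<And>x. g (pp x) = pp (G x)" "\<And>x m. G (x + ri m) = G x + ri (LAi A m)"
    "\<And>n v. detm1 (mat_pow A n) \<noteq> 0 \<Longrightarrow> \<exists>x. (G ^^ n) x = x + ri v"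
    using lift_solve[OF hom] by blast
  obtain x where x: "(G ^^ 2) x = x + ri v" using G(3)[of 2] assms(1) by blast
  have gi: "(g ^^ n) (pp x) = pp ((G ^^ n) x)" for n by (rule iter_pp) (rule G(1))
  have p2: "(g ^^ 2) (pp x) = pp x" using gi[of 2] x by simp
  have p1: "(g ^^ 1) (pp x) \<noteq> pp x"
  proof
    assume "(g ^^ 1) (pp x) = pp x"
    then have "pp (G x) = pp x" using gi[of 1] by simp
    then obtain u where u: "G x = x + ri u" using pp_eq by blast
    have "(G ^^ 2) x = G (G x)" by (simp add: numeral_2_eq_2)
    also have "\<dots> = x + ri (u + LAi A u)" by (simp add: u G(2) ri_add)
    finally have "v = u + LAi A u" using x by (simp add: ri_inj)
    then show False using assms(2) by blast
  qed
  show "2 \<in> Per torus g" unfolding Per_def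
  proof (intro CollectI conjI bexI[of _ "pp x"] allI impI)
    fix m :: nat assume "0 < m \<and> m < 2"
    then have "m = 1" by linarith
    then show "(g ^^ m) (pp x) \<noteq> pp x" using p1 by simp
  qed (auto simp: p2 pp_torus)
qed

lemma MPer3:
  assumes "detm1 (mat_pow A 3) \<noteq> 0" "\<And>u. v \<noteq> u + LAi A u + LAi A (LAi A u)"
  shows "3 \<in> MPer A"
proof (rule MPer_intro)
  fix g assume hom: "homotopic_with_canon (\<lambda>_. True) torus torus (toral_map A) g"
  obtain G where G: "\<And>x. g (pp x) = pp (G x)" "\<And>x m. G (x + ri m) = G x + ri (LAi A m)"
    "\<And>n v. detm1 (mat_pow A n) \<noteq> 0 \<Longrightarrow> \<exists>x. (G ^^ n) x = x + ri v"
    using lift_solve[OF hom] by blast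
  obtain x where x: "(G ^^ 3) x = x + ri v" using G(3)[of 3] assms(1) by blast
  have gi: "(g ^^ n) (pp x) = pp ((G ^^ n) x)" for n by (rule iter_pp) (rule G(1))
  have p3: "(g ^^ 3) (pp x) = pp x" using gi[of 3] x by simp
  have p1: "g (pp x) \<noteq> pp x"
  proof
    assume "g (pp x) = pp x"
    then have "pp (G x) = pp x" using G(1) by simp
    then obtain u where u: "G x = x + ri u" using pp_eq by blast
    have GG: "G (G x) = x + ri (u + LAi A u)" by (simp add: u G(2) ri_add)
    have "(G ^^ 3) x = G (G (G x))" by (simp add: numeral_3_eq_3)
    also have "\<dots> = G (x + ri (u + LAi A u))" by (simp only: GG)
    also have "\<dots> = x + ri u + ri (LAi A (u + LAi A u))" by (simp only: G(2) u)
    also have "\<dots> = x + ri (u + LAi A u + LAi A (LAi A u))"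
      by (simp add: ri_add LAi_add algebra_simps)
    finally have "v = u + LAi A u + LAi A (LAi A u)" using x by (simp add: ri_inj)
    then show False using assms(2) by blast
  qed
  have p2: "g (g (pp x)) \<noteq> pp x"
  proof
    assume a: "g (g (pp x)) = pp x"
    have "g (pp x) = g (g (g (pp x)))" using a by simp
    also have "\<dots> = pp x" using p3 by (simp add: numeral_3_eq_3)
    finally show False using p1 by simp
  qed
  show "3 \<in> Per torus g" unfolding Per_def
  proof (intro CollectI conjI bexI[of _ "pp x"] allI impI)
    fix m :: nat assume "0 < m \<and> m < 3"
    then have "m = 1 \<or> m = 2" by linarith
    then show "(g ^^ m) (pp x) \<noteq> pp x" using p1 p2 by (auto simp: numeral_2_eq_2)
  qed (auto simp: p3 pp_torus)
qed

definition det2 :: "int^2^2 \<Rightarrow> int" where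
  "det2 B = B$1$1 * B$2$2 - B$1$2 * B$2$1"

lemma det2_mult: "det2 (X ** Y) = det2 X * det2 Y"
  by (simp add: det2_def matrix_matrix_mult_def sum_2 algebra_simps)

lemma det2_one: "det2 (mat 1) = 1"
  by (simp add: det2_def mat_def)

lemma det2_pow: "det2 (mat_pow A n) = det2 A ^ n"
  by (induction n) (simp_all add: det2_one mat_pow_Suc det2_mult)

lemma int_pow_eq_1: "(d::int) ^ k = 1 \<Longrightarrow> k > 0 \<Longrightarrow> \<bar>d\<bar> = 1"
proof -
  assume h: "d ^ k = 1" "k > 0"
  then have a: "\<bar>d\<bar> ^ k = 1" by (metis power_abs abs_one)
  show ?thesis
  proof (cases "\<bar>d\<bar> > 1")
    case True then have "\<bar>d\<bar> ^ k > 1" using h(2) by (simp add: one_less_power)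
    then show ?thesis using a by simp
  next
    case False
    moreover have "d \<noteq> 0" using h by (auto simp: zero_power)
    ultimately show ?thesis by linarith
  qed
qed

lemma real_eigen:
  fixes A :: "int^2^2"
  assumes "(A$1$1 + A$2$2)^2 \<ge> 4 * det2 A"
  shows "\<exists>r::real. is_complex_eigenvalue A (complex_of_real r)"
proof -
  define a where "a = A$1$1" define b where "b = A$1$2"
  define c where "c = A$2$1" define e where "e = A$2$2"
  have mv: "(map_matrix of_int A) *v v = (\<chi> i. if i = 1 then of_int a * v$1 + of_int b * v$2 else of_int c * v$1 + of_int e * v$2)" for v :: "complex^2"
    by (simp add: vec_eq_iff forall_2 matrix_vector_mult_def sum_2 a_def b_def c_def e_def)
  show ?thesis
  proof (cases "b = 0")
    case True
    define v :: "complex^2" where "v = (\<chi> i. if i = 1 then 0 else 1)"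
    have "v \<noteq> 0" by (simp add: v_def vec_eq_iff forall_2)
    moreover have "(map_matrix of_int A) *v v = complex_of_real (of_int e) *s v"
      by (simp add: mv v_def vec_eq_iff forall_2 True)
    ultimately show ?thesis unfolding is_complex_eigenvalue_def by blast
  next
    case False
    define t where "t = real_of_int (a + e)"
    define D where "D = real_of_int (a*e - b*c)"
    have disc: "t^2 - 4*D \<ge> 0"
      using assms unfolding t_def D_def a_def b_def c_def e_def det2_def
      by (metis (mono_tags) diff_ge_0_iff_ge of_int_le_iff of_int_mult of_int_numeral of_int_power)
    define \<mu> where "\<mu> = (t + sqrt (t^2 - 4*D)) / 2"
    have \<mu>: "\<mu>^2 = t*\<mu> - D"
    proof -
      have "sqrt (t^2 - 4*D)^2 = t^2 - 4*D" using disc by simp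
      then show ?thesis unfolding \<mu>_def by (simp add: power2_eq_square field_simps)
    qed
    define v :: "complex^2" where "v = (\<chi> i. if i = 1 then of_int b else of_real \<mu> - of_int a)"
    have "v \<noteq> 0" using False by (simp add: v_def vec_eq_iff forall_2)
    moreover have "(map_matrix of_int A) *v v = complex_of_real \<mu> *s v"
    proof -
      have r: "real_of_int c * real_of_int b + real_of_int e * (\<mu> - real_of_int a) = \<mu> * (\<mu> - real_of_int a)"
        using \<mu> unfolding t_def D_def by (simp add: power2_eq_square algebra_simps)
      have "complex_of_real (real_of_int c * real_of_int b + real_of_int e * (\<mu> - real_of_int a)) = complex_of_real (\<mu> * (\<mu> - real_of_int a))"
        using r by simp
      then show ?thesis
        by (simp add: mv v_def vec_eq_iff forall_2 algebra_simps)
    qed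
    ultimately show ?thesis unfolding is_complex_eigenvalue_def by blast
  qed
qed

fun pq :: "int \<Rightarrow> nat \<Rightarrow> int \<times> int" where
  "pq t 0 = (0, 1)"
| "pq t (Suc n) = (t * fst (pq t n) + snd (pq t n), - fst (pq t n))"

lemma pow_entries:
  assumes "det2 A = 1"
  shows "mat_pow A n $1$1 = fst (pq (A$1$1 + A$2$2) n) * A$1$1 + snd (pq (A$1$1 + A$2$2) n)
       \<and> mat_pow A n $1$2 = fst (pq (A$1$1 + A$2$2) n) * A$1$2
       \<and> mat_pow A n $2$1 = fst (pq (A$1$1 + A$2$2) n) * A$2$1
       \<and> mat_pow A n $2$2 = fst (pq (A$1$1 + A$2$2) n) * A$2$2 + snd (pq (A$1$1 + A$2$2) n)"
proof (induction n)
  case 0 then show ?case by (simp add: mat_def)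
next
  case (Suc n)
  define a where "a = A$1$1" define b where "b = A$1$2"
  define c where "c = A$2$1" define e where "e = A$2$2"
  define p where "p = fst (pq (a + e) n)" define q where "q = snd (pq (a + e) n)"
  have bc: "b * c = a * e - 1" using assms by (simp add: det2_def a_def b_def c_def e_def)
  have IH: "mat_pow A n $1$1 = p * a + q" "mat_pow A n $1$2 = p * b"
    "mat_pow A n $2$1 = p * c" "mat_pow A n $2$2 = p * e + q"
    using Suc.IH by (simp_all add: p_def q_def a_def b_def c_def e_def)
  have e11: "a * (p * a + q) + b * (p * c) = ((a+e) * p + q) * a + - p" using bc by algebra
  have e12: "a * (p * b) + b * (p * e + q) = ((a+e) * p + q) * b" by algebra
  have e21: "c * (p * a + q) + e * (p * c) = ((a+e) * p + q) * c" by algebra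
  have e22: "c * (p * b) + e * (p * e + q) = ((a+e) * p + q) * e + - p" using bc by algebra
  show ?case
    unfolding mat_pow_Suc
    by (simp add: matrix_matrix_mult_def sum_2 IH e11 e12 e21 e22 flip: a_def b_def c_def e_def p_def q_def)
qed

lemma no_surj:
  fixes w x y z :: int
  assumes "\<bar>w*z - x*y\<bar> \<ge> 2"
  shows "\<exists>v. \<forall>u. v \<noteq> (w * fst u + x * snd u, y * fst u + z * snd u)"
proof (rule ccontr)
  assume "\<not> ?thesis"
  then have all: "\<forall>v. \<exists>u. v = (w * fst u + x * snd u, y * fst u + z * snd u)" by blast
  obtain p where p: "(1,0) = (w * fst p + x * snd p, y * fst p + z * snd p)" using all by blast
  obtain r where r: "(0,1) = (w * fst r + x * snd r, y * fst r + z * snd r)" using all by blast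
  have e: "w * fst p + x * snd p = 1" "y * fst p + z * snd p = 0"
          "w * fst r + x * snd r = 0" "y * fst r + z * snd r = 1" using p r by simp_all
  have "(w*z - x*y) * (fst p * snd r - snd p * fst r) =
        (w * fst p + x * snd p) * (y * fst r + z * snd r) - (w * fst r + x * snd r) * (y * fst p + z * snd p)"
    by algebra
  then have d: "(w*z - x*y) * (fst p * snd r - snd p * fst r) = 1" using e by simp
  then have "fst p * snd r - snd p * fst r \<noteq> 0" by auto
  then have "\<bar>fst p * snd r - snd p * fst r\<bar> \<ge> 1" by simp
  then have "\<bar>w*z - x*y\<bar> * \<bar>fst p * snd r - snd p * fst r\<bar> \<ge> 2 * 1"
    using assms by (intro mult_mono) auto
  then show False using d by (simp add: abs_mult[symmetric])
qed

lemma period_dvd: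
  assumes "(f ^^ k) y = y" "(f ^^ n) y = y" "n \<ge> 1" "\<forall>m. 0 < m \<and> m < n \<longrightarrow> (f ^^ m) y \<noteq> y"
  shows "n dvd k"
proof -
  have mult: "(f ^^ (n * q)) y = y" for q
  proof (induction q)
    case 0 then show ?case by simp
  next
    case (Suc q)
    have "(f ^^ (n * Suc q)) y = (f ^^ (n + n * q)) y" by (simp only: mult_Suc_right)
    also have "\<dots> = (f ^^ n) ((f ^^ (n * q)) y)" by (simp only: funpow_add comp_apply)
    also have "\<dots> = y" by (simp only: Suc.IH assms(2))
    finally show ?case .
  qed
  have "(f ^^ k) y = (f ^^ (k mod n + n * (k div n))) y" by (simp only: mod_mult_div_eq)
  also have "\<dots> = (f ^^ (k mod n)) ((f ^^ (n * (k div n))) y)"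
    by (simp only: funpow_add comp_apply)
  finally have "(f ^^ k) y = (f ^^ (k mod n)) ((f ^^ (n * (k div n))) y)" .
  then have "(f ^^ (k mod n)) y = y" using mult[of "k div n"] assms(1) by (simp only:)
  moreover have "k mod n < n" using assms(3) by simp
  ultimately have "k mod n = 0" using assms(4)[rule_format, of "k mod n"] by (cases "k mod n = 0") simp_all
  then show ?thesis by (simp add: dvd_eq_mod_eq_0)
qed

lemma ord_eq:
  assumes "has_finite_order A" "mat_pow A N = mat 1" "N > 0"
    "\<And>j. 0 < j \<Longrightarrow> j < N \<Longrightarrow> mat_pow A j \<noteq> mat 1"
  shows "mat_ord A = N"
proof -
  note kp = ord_props[OF assms(1)]
  have "\<not> mat_ord A < N" using kp(1,2) assms(4)[of "mat_ord A"] by auto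
  moreover have "\<not> N < mat_ord A" using kp(3)[of N] assms(2,3) by auto
  ultimately show ?thesis by simp
qed

lemma toral_cont: "continuous_on torus (toral_map A)"
proof -
  have "toral_map A = (\<lambda>y. (fst y powi (A$1$1) * snd y powi (A$1$2), fst y powi (A$2$1) * snd y powi (A$2$2)))"
    by (auto simp: toral_map_def)
  moreover have "continuous_on torus (\<lambda>y. (fst y powi (A$1$1) * snd y powi (A$1$2), fst y powi (A$2$1) * snd y powi (A$2$2)))"
    by (intro continuous_intros) (auto simp: torus_def)
  ultimately show ?thesis by simp
qed

lemma toral_torus: "y \<in> torus \<Longrightarrow> toral_map A y \<in> torus"
proof -
  assume "y \<in> torus"
  then obtain x where "y = pp x" using torus_pp by blast
  then show ?thesis by (simp add: toral_pp pp_torus)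
qed

lemma MPer_sub: "MPer A \<subseteq> Per torus (toral_map A)"
proof -
  have "homotopic_with_canon (\<lambda>_. True) torus torus (toral_map A) (toral_map A)"
    using toral_cont toral_torus by (auto simp: continuous_map_subtopology_eu)
  then have "Per torus (toral_map A) \<in> {Per torus g |g. homotopic_with_canon (\<lambda>_. True) torus torus (toral_map A) g}"
    by auto
  then show ?thesis unfolding MPer_def by (rule Inter_lower)
qed

lemma t_bound: "(t::int)^2 < 4 \<Longrightarrow> t = -1 \<or> t = 0 \<or> t = 1"
proof -
  assume h: "t^2 < 4"
  have "t \<le> 1"
  proof (rule ccontr)
    assume "\<not> t \<le> 1" then have "t \<ge> 2" by simp
    then have "t * t \<ge> 2 * 2" by (intro mult_mono) auto
    then show False using h by (simp add: power2_eq_square)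
  qed
  moreover have "t \<ge> -1"
  proof (rule ccontr)
    assume "\<not> t \<ge> -1" then have "-t \<ge> 2" by simp
    then have "(-t) * (-t) \<ge> 2 * 2" by (intro mult_mono) auto
    then show False using h by (simp add: power2_eq_square)
  qed
  ultimately show ?thesis by linarith
qed

lemma pow_facts:
  assumes D: "det2 A = 1" and t: "(A$1$1 + A$2$2)^2 < 4"
  shows "mat_pow A n = mat 1 \<longleftrightarrow> fst (pq (A$1$1 + A$2$2) n) = 0 \<and> snd (pq (A$1$1 + A$2$2) n) = 1"
    and "detm1 (mat_pow A n) = fst (pq (A$1$1 + A$2$2) n)^2
           + fst (pq (A$1$1 + A$2$2) n) * (snd (pq (A$1$1 + A$2$2) n) - 1) * (A$1$1 + A$2$2)
           + (snd (pq (A$1$1 + A$2$2) n) - 1)^2"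
proof -
  define a where "a = A$1$1" define b where "b = A$1$2"
  define c where "c = A$2$1" define e where "e = A$2$2"
  define p where "p = fst (pq (a + e) n)" define q where "q = snd (pq (a + e) n)"
  have bc: "b * c = a * e - 1" using D by (simp add: det2_def a_def b_def c_def e_def)
  have PE: "mat_pow A n $1$1 = p * a + q" "mat_pow A n $1$2 = p * b"
    "mat_pow A n $2$1 = p * c" "mat_pow A n $2$2 = p * e + q"
    using pow_entries[OF D, of n] by (simp_all add: p_def q_def a_def b_def c_def e_def)
  have tt: "a + e = -1 \<or> a + e = 0 \<or> a + e = 1" using t_bound t by (simp add: a_def e_def)
  show "mat_pow A n = mat 1 \<longleftrightarrow> fst (pq (A$1$1 + A$2$2) n) = 0 \<and> snd (pq (A$1$1 + A$2$2) n) = 1"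
    unfolding a_def[symmetric] e_def[symmetric] p_def[symmetric] q_def[symmetric]
  proof
    assume eq: "mat_pow A n = mat 1"
    have m: "p * a + q = 1" "p * b = 0" "p * c = 0" "p * e + q = 1"
      using PE eq by (simp_all add: mat_def)
    show "p = 0 \<and> q = 1"
    proof (cases "p = 0")
      case True then show ?thesis using m by simp
    next
      case False
      have "p * a = p * e" using m by linarith
      then have "b = 0" "c = 0" "a = e" using m False by auto
      then have "a = 0" using tt by linarith
      then show ?thesis using bc \<open>b = 0\<close> by simp
    qed
  next
    assume "p = 0 \<and> q = 1"
    then show "mat_pow A n = mat 1" using PE by (intro mat2_eqI) (simp_all add: mat_def)
  qed
  show "detm1 (mat_pow A n) = fst (pq (A$1$1 + A$2$2) n)^2
           + fst (pq (A$1$1 + A$2$2) n) * (snd (pq (A$1$1 + A$2$2) n) - 1) * (A$1$1 + A$2$2)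
           + (snd (pq (A$1$1 + A$2$2) n) - 1)^2"
    unfolding a_def[symmetric] e_def[symmetric] p_def[symmetric] q_def[symmetric] detm1_def PE
    using bc by algebra
qed

lemma L1:
  assumes "det2 A = 1" "A$1$1 + A$2$2 \<le> 1"
  shows "1 \<in> MPer A"
proof (rule MPer1)
  have "detm1 A = det2 A - (A$1$1 + A$2$2) + 1" by (simp add: detm1_def det2_def algebra_simps)
  then show "detm1 A \<noteq> 0" using assms by simp
qed

lemma pq2: "pq t 2 = (t, -1)" by (simp add: eval_nat_numeral)
lemma pq3: "pq t 3 = (t*t - 1, -t)" by (simp add: eval_nat_numeral)

lemma L2:
  assumes D: "det2 A = 1" and t: "A$1$1 + A$2$2 = 0 \<or> A$1$1 + A$2$2 = 1"
  shows "2 \<in> MPer A"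
proof -
  define a where "a = A$1$1" define b where "b = A$1$2"
  define c where "c = A$2$1" define e where "e = A$2$2"
  have t4: "(A$1$1 + A$2$2)^2 < 4" using t by auto
  have "detm1 (mat_pow A 2) = (A$1$1 + A$2$2)^2 + (A$1$1 + A$2$2) * (-2) * (A$1$1 + A$2$2) + 4"
    using pow_facts(2)[OF D t4, of 2] by (simp add: pq2)
  then have d: "detm1 (mat_pow A 2) \<noteq> 0" using t by auto
  have "\<bar>(1+a)*(1+e) - b*c\<bar> \<ge> 2"
  proof -
    have "(1+a)*(1+e) - b*c = 1 + (a + e) + det2 A" by (simp add: det2_def a_def b_def c_def e_def algebra_simps)
    then show ?thesis using t D by (auto simp: a_def e_def)
  qed
  then obtain v where v: "\<forall>u. v \<noteq> ((1+a) * fst u + b * snd u, c * fst u + (1+e) * snd u)"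
    using no_surj by blast
  have "v \<noteq> u + LAi A u" for u
  proof -
    have "u + LAi A u = ((1+a) * fst u + b * snd u, c * fst u + (1+e) * snd u)"
      by (simp add: LAi_def a_def b_def c_def e_def prod_eq_iff algebra_simps)
    then show ?thesis using v by simp
  qed
  then show ?thesis using MPer2[OF d] by blast
qed

lemma L3:
  assumes D: "det2 A = 1" and t: "A$1$1 + A$2$2 = 1"
  shows "3 \<in> MPer A"
proof -
  have t4: "(A$1$1 + A$2$2)^2 < 4" using t by auto
  have "detm1 (mat_pow A 3) = 4"
    using pow_facts(2)[OF D t4, of 3] t by (simp add: pq3)
  then have d: "detm1 (mat_pow A 3) \<noteq> 0" by simp
  have PE2: "mat_pow A 2 $1$1 = A$1$1 - 1" "mat_pow A 2 $1$2 = A$1$2"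
    using pow_entries[OF D, of 2] t by (simp_all add: pq2)
  have "(1, 0) \<noteq> u + LAi A u + LAi A (LAi A u)" for u
  proof -
    have "LAi A (LAi A u) = LAi (mat_pow A 2) u"
      by (simp add: mat_pow_def eval_nat_numeral LAi_mult)
    then have "fst (u + LAi A u + LAi A (LAi A u)) = 2 * (A$1$1 * fst u + A$1$2 * snd u)"
      by (simp add: LAi_def PE2 algebra_simps)
    moreover have "(1::int) \<noteq> 2 * z" for z by presburger
    ultimately show ?thesis by (metis fst_conv)
  qed
  then show ?thesis using MPer3[OF d] by blast
qed

lemma pq_vals:
  "pq 0 1 = (1,0)" "pq 0 2 = (0,-1)" "pq 0 3 = (-1,0)" "pq 0 4 = (0,1)"
  "pq (-1) 1 = (1,0)" "pq (-1) 2 = (-1,-1)" "pq (-1) 3 = (0,1)"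
  "pq 1 1 = (1,0)" "pq 1 2 = (1,-1)" "pq 1 3 = (0,-1)" "pq 1 4 = (-1,0)" "pq 1 5 = (-1,1)" "pq 1 6 = (0,1)"
  by (simp_all add: eval_nat_numeral)

lemma dvd4: "(n::nat) dvd 4 \<Longrightarrow> n = 1 \<or> n = 2 \<or> n = 4"
proof -
  assume h: "n dvd 4"
  then have "n \<le> 4" "n > 0" by (auto dest: dvd_imp_le intro: Nat.gr0I)
  then have "n = 1 \<or> n = 2 \<or> n = 3 \<or> n = 4" by linarith
  then show ?thesis using h by auto
qed

lemma dvd3: "(n::nat) dvd 3 \<Longrightarrow> n = 1 \<or> n = 3"
proof -
  assume h: "n dvd 3"
  then have "n \<le> 3" "n > 0" by (auto dest: dvd_imp_le intro: Nat.gr0I)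
  then have "n = 1 \<or> n = 2 \<or> n = 3" by linarith
  then show ?thesis using h by auto
qed

lemma dvd6: "(n::nat) dvd 6 \<Longrightarrow> n = 1 \<or> n = 2 \<or> n = 3 \<or> n = 6"
proof -
  assume h: "n dvd 6"
  then have "n \<le> 6" "n > 0" by (auto dest: dvd_imp_le intro: Nat.gr0I)
  then have "n = 1 \<or> n = 2 \<or> n = 3 \<or> n = 4 \<or> n = 5 \<or> n = 6" by linarith
  then show ?thesis using h by auto
qed

lemma less4: "0 < (j::nat) \<Longrightarrow> j < 4 \<Longrightarrow> j = 1 \<or> j = 2 \<or> j = 3" by linarith
lemma less3: "0 < (j::nat) \<Longrightarrow> j < 3 \<Longrightarrow> j = 1 \<or> j = 2" by linarith
lemma less6: "0 < (j::nat) \<Longrightarrow> j < 6 \<Longrightarrow> j = 1 \<or> j = 2 \<or> j = 3 \<or> j = 4 \<or> j = 5" by linarith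

lemma per_sub:
  assumes fo: "has_finite_order A"
    and ev: "\<forall>\<mu>. is_complex_eigenvalue A \<mu> \<longrightarrow> \<mu> \<notin> \<real> \<and> (\<exists>n>0. \<mu> ^ n = 1)"
  shows "Per torus (toral_map A) \<subseteq> MPer A \<union> {mat_ord A}"
proof
  fix n assume n: "n \<in> Per torus (toral_map A)"
  note kp = ord_props[OF fo]
  define t where "t = A$1$1 + A$2$2"
  have Dk: "det2 A ^ mat_ord A = 1" using det2_pow[of A "mat_ord A"] kp(2) det2_one by simp
  have absD: "\<bar>det2 A\<bar> = 1" using int_pow_eq_1[OF Dk kp(1)] .
  have neg: "\<not> (t^2 \<ge> 4 * det2 A)"
  proof
    assume "t^2 \<ge> 4 * det2 A"
    then obtain r where r: "is_complex_eigenvalue A (complex_of_real r)"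
      using real_eigen[of A] unfolding t_def by blast
    have "complex_of_real r \<in> \<real>" by simp
    then show False using ev r by blast
  qed
  have D1: "det2 A = 1"
  proof (rule ccontr)
    assume "det2 A \<noteq> 1"
    then have "det2 A = -1" using absD by linarith
    moreover have "t^2 \<ge> 0" by simp
    ultimately show False using neg by simp
  qed
  have t4: "(A$1$1 + A$2$2)^2 < 4" using neg D1 unfolding t_def by simp
  have tt: "t = -1 \<or> t = 0 \<or> t = 1" using t_bound t4 unfolding t_def by blast
  note PF1 = pow_facts(1)[OF D1 t4, unfolded t_def[symmetric]]
  obtain y where y: "y \<in> torus" "(toral_map A ^^ n) y = y" "n \<ge> 1"
    "\<forall>m. 0 < m \<and> m < n \<longrightarrow> (toral_map A ^^ m) y \<noteq> y"
    using n unfolding Per_def by blast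
  have fk: "(toral_map A ^^ mat_ord A) y = y"
  proof -
    obtain x where x: "y = pp x" using torus_pp y(1) by blast
    show ?thesis unfolding x toral_iter_pp kp(2) by simp
  qed
  have ndvd: "n dvd mat_ord A" by (rule period_dvd[OF fk y(2) y(3) y(4)])
  have L1': "1 \<in> MPer A" using L1[OF D1] tt unfolding t_def by auto
  from tt show "n \<in> MPer A \<union> {mat_ord A}"
  proof (elim disjE)
    assume t0: "t = 0"
    have "mat_ord A = 4"
    proof (rule ord_eq[OF fo])
      show "mat_pow A 4 = mat 1" using PF1[of 4] t0 pq_vals by simp
      show "mat_pow A j \<noteq> mat 1" if "0 < j" "j < 4" for j
        using less4[OF that] PF1[of 1] PF1[of 2] PF1[of 3] t0 pq_vals by auto
    qed simp
    then have "n = 1 \<or> n = 2 \<or> n = 4" using ndvd dvd4 by simp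
    moreover have "2 \<in> MPer A" using L2[OF D1] t0 unfolding t_def by simp
    ultimately show ?thesis using L1' \<open>mat_ord A = 4\<close> by auto
  next
    assume t0: "t = -1"
    have "mat_ord A = 3"
    proof (rule ord_eq[OF fo])
      show "mat_pow A 3 = mat 1" using PF1[of 3] t0 pq_vals by simp
      show "mat_pow A j \<noteq> mat 1" if "0 < j" "j < 3" for j
        using less3[OF that] PF1[of 1] PF1[of 2] t0 pq_vals by auto
    qed simp
    then have "n = 1 \<or> n = 3" using ndvd dvd3 by simp
    then show ?thesis using L1' \<open>mat_ord A = 3\<close> by auto
  next
    assume t0: "t = 1"
    have "mat_ord A = 6"
    proof (rule ord_eq[OF fo])
      show "mat_pow A 6 = mat 1" using PF1[of 6] t0 pq_vals by simp
      show "mat_pow A j \<noteq> mat 1" if "0 < j" "j < 6" for j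
        using less6[OF that] PF1[of 1] PF1[of 2] PF1[of 3] PF1[of 4] PF1[of 5] t0 pq_vals by auto
    qed simp
    then have "n = 1 \<or> n = 2 \<or> n = 3 \<or> n = 6" using ndvd dvd6 by simp
    moreover have "2 \<in> MPer A" using L2[OF D1] t0 unfolding t_def by simp
    moreover have "3 \<in> MPer A" using L3[OF D1] t0 unfolding t_def by simp
    ultimately show ?thesis using L1' \<open>mat_ord A = 6\<close> by auto
  qed
qed

theorem mainTheorem1:
  fixes A :: "int^2^2"
  assumes "has_finite_order A"
  shows "mat_ord A \<in> Per torus (toral_map A)
    \<and> ((\<forall>\<mu>. is_complex_eigenvalue A \<mu> \<longrightarrow> \<mu> \<notin> \<real> \<and> (\<exists>n>0. \<mu> ^ n = 1))
        \<longrightarrow> Per torus (toral_map A) = MPer A \<union> {mat_ord A})"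
proof (intro conjI impI)
  show k: "mat_ord A \<in> Per torus (toral_map A)" by (rule part1[OF assms])
  assume ev: "\<forall>\<mu>. is_complex_eigenvalue A \<mu> \<longrightarrow> \<mu> \<notin> \<real> \<and> (\<exists>n>0. \<mu> ^ n = 1)"
  show "Per torus (toral_map A) = MPer A \<union> {mat_ord A}"
  proof
    show "Per torus (toral_map A) \<subseteq> MPer A \<union> {mat_ord A}" by (rule per_sub[OF assms ev])
    show "MPer A \<union> {mat_ord A} \<subseteq> Per torus (toral_map A)" using MPer_sub k by auto
  qed
qed

end
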